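(* Let $m \equiv 3 \pmod 4$ with $m > 3$, $n = 3^m - 1$, $v = (3^{(m-1)/2}-1)/2$ and $\delta = (3^{(m-1)/2}+11)/2$. Then $\gcd(v,n) = 1$, and, setting $T_{(0,1,m)}(v) = \{ vi \bmod n : i \in T_{(0,1,m)}\}$, we have $\{n-(\delta-1), \ldots, n-2, n-1\} \subseteq T_{(0,1,m)}(v)$.
   Context: For an integer $0 \le j \le n-1$ with $3$-adic expansion $j = \sum_{t=0}^{m-1} j_t 3^t$, $j_t \in \{0,1,2\}$, let $w_3(j) = \sum_{t=0}^{m-1} j_t$. For distinct $i_1,i_2 \in \{0,1,2,3\}$, $T_{(i_1,i_2,m)} = \{1 \le j \le n-1 : w_3(j) \equiv i_1 \text{ or } i_2 \pmod 4\}$. For an integer $b$, $b \bmod n$ is the unique $b_0 \in \{0,\ldots,n-1\}$ with $b \equiv b_0 \pmod n$. *)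

theory Defs
  imports Main
begin

fun w3 :: "nat \<Rightarrow> nat" where
  "w3 j = (if j = 0 then 0 else j mod 3 + w3 (j div 3))"

declare w3.simps [simp del]

definition T_set :: "nat \<Rightarrow> nat \<Rightarrow> nat \<Rightarrow> nat set" where
  "T_set i1 i2 m = {j. 1 \<le> j \<and> j \<le> 3 ^ m - 2 \<and> (w3 j mod 4 = i1 \<or> w3 j mod 4 = i2)}"

end

theory Submission
  imports Defs
begin

lemma w3_0 [simp]: "w3 0 = 0"
  by (subst w3.simps) simp

lemma w3_step: "d < 3 \<Longrightarrow> w3 (d + 3*a) = d + w3 a"
  by (subst w3.simps) auto

lemma w3_1: "w3 1 = 1" using w3_step[of 1 0] by simp
lemma w3_2: "w3 2 = 2" using w3_step[of 2 0] by simp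
lemma w3_4: "w3 4 = 2" using w3_step[of 1 1] w3_1 by simp
lemma w3_5: "w3 5 = 3" using w3_step[of 2 1] w3_1 by simp
lemma w3_11: "w3 11 = 3" using w3_step[of 2 3] w3_step[of 0 1] w3_1 by simp

lemma w3_add_pow: "a < 3^p \<Longrightarrow> w3 (a + 3^p * b) = w3 a + w3 b"
proof (induction p arbitrary: a)
  case 0
  then show ?case by (simp add: w3_1 w3_2 w3_4 w3_5 w3_11)
next
  case (Suc p)
  have a: "a = a mod 3 + 3 * (a div 3)" by simp
  have lt: "a div 3 < 3^p" using Suc.prems by auto
  have eq: "a + 3^Suc p * b = a mod 3 + 3 * (a div 3 + 3^p * b)" by simp
  have "w3 (a + 3^Suc p * b) = w3 (a mod 3 + 3 * (a div 3 + 3^p * b))"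
    using arg_cong[where f=w3, OF eq] .
  also have "\<dots> = a mod 3 + w3 (a div 3 + 3^p * b)"
    using w3_step[of "a mod 3" "a div 3 + 3^p * b"] by simp
  also have "\<dots> = a mod 3 + w3 (a div 3) + w3 b" using Suc.IH[OF lt] by simp
  also have "a mod 3 + w3 (a div 3) = w3 a" using w3_step[of "a mod 3" "a div 3"] a by simp
  finally show ?case .
qed

lemma w3_parity: "w3 a mod 2 = a mod 2"
proof (induction a rule: less_induct)
  case (less a)
  show ?case
  proof (cases "a = 0")
    case True then show ?thesis by (simp add: w3_1 w3_2 w3_4 w3_5 w3_11)
  next
    case False
    have "w3 a = a mod 3 + w3 (a div 3)" using w3_step[of "a mod 3" "a div 3"] by simp
    moreover have "a div 3 < a" using False by simp
    then have "w3 (a div 3) mod 2 = (a div 3) mod 2" by (rule less.IH)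
    moreover have "a mod 2 = (a mod 3 + a div 3) mod 2"
    proof -
      have "a = (a mod 3 + a div 3) + 2*(a div 3)" by simp
      then have "a mod 2 = ((a mod 3 + a div 3) + 2*(a div 3)) mod 2" by (rule arg_cong)
      also have "\<dots> = (a mod 3 + a div 3) mod 2" by (rule mod_mult_self2)
      finally show ?thesis .
    qed
    ultimately show ?thesis by (metis mod_add_right_eq)
  qed
qed

lemma w3_times3: "w3 (3*a) = w3 a"
  using w3_step[of 0 a] by simp

lemma mod_helper:
  fixes v j t c n :: nat
  assumes "v*j + t = c*n" "1 \<le> t" "t < n"
  shows "(v*j) mod n = n - t"
proof -
  have "c \<noteq> 0"
  proof
    assume "c = 0"
    then have "v*j + t = 0" using assms(1) by simp
    then show False using assms(2) by simp
  qed
  then obtain c' where c': "c = Suc c'" by (cases c) auto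
  have "v*j + t = n + c'*n" using assms(1) unfolding c' by simp
  then have eq: "v*j = (n - t) + (c-1)*n" using assms(3) unfolding c' by simp
  have "(v*j) mod n = ((n - t) + (c-1)*n) mod n" using eq by (rule arg_cong)
  also have "\<dots> = (n - t) mod n" by (rule mod_mult_self1)
  also have "\<dots> = n - t" using assms by simp
  finally show ?thesis .
qed

lemma finish:
  fixes v j t c n :: nat
  assumes "v*j + t = c*n" "1 \<le> t" "t < n" "1 \<le> j" "j \<le> n-1" "w3 j mod 4 = 0 \<or> w3 j mod 4 = 1"
  shows "\<exists>j. 1 \<le> j \<and> j \<le> n-1 \<and> (w3 j mod 4 = 0 \<or> w3 j mod 4 = 1) \<and> (v*j) mod n = n - t"
proof -
  have md: "(v*j) mod n = n - t" by (rule mod_helper[OF assms(1-3)])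
  show ?thesis
    by (intro exI[of _ j] conjI) (fact assms(4), fact assms(5), fact assms(6), fact md)
qed

lemma core:
  fixes v t p :: nat
  assumes "odd v" "v \<ge> 13" "1 \<le> t" "t \<le> v+5" "3^p = 6*v+3"
  defines "n \<equiv> 12*v*v+12*v+2"
  shows "\<exists>j. 1 \<le> j \<and> j \<le> n-1 \<and> (w3 j mod 4 = 0 \<or> w3 j mod 4 = 1) \<and> (v*j) mod n = n - t"
proof -
  have tn: "t < n" using assms unfolding n_def by (simp add: algebra_simps)
  show ?thesis
  proof (cases "even t")
    case True
    then obtain s where s: "t = 2*s" by blast
    define j where "j = 3*t + 3^p*t"
    have j2: "j = 12*s*(v+1)" unfolding j_def using s assms(5) by (simp add: algebra_simps)
    have "3*t < 3^p" using assms by simp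
    then have "w3 j = w3 (3*t) + w3 t" unfolding j_def by (rule w3_add_pow)
    then have wj: "w3 j = 2 * w3 t" by (simp add: w3_times3)
    have "even (w3 t)" using w3_parity[of t] True by (metis even_iff_mod_2_eq_zero)
    then have w: "w3 j mod 4 = 0" using wj by (auto elim!: evenE)
    have e: "v*j + t = s*n" unfolding j2 n_def s by (simp add: algebra_simps)
    have j1: "1 \<le> j" using j2 s assms by simp
    have jn: "j \<le> n - 1"
    proof -
      have "2*s \<le> v+5" using s assms by simp
      then have "2*s*(6*(v+1)) \<le> (v+5)*(6*(v+1))" by (rule mult_le_mono1)
      then have "12*s*(v+1) \<le> 6*(v+5)*(v+1)" by (simp add: algebra_simps)
      also have "\<dots> \<le> 12*v*v+12*v+1"
      proof -
        have h: "13*v \<le> v*v" using assms(2) by (rule mult_le_mono1)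
        have e1: "6*(v+5)*(v+1) = 6*(v*v) + 36*v + 30" by (simp add: algebra_simps)
        have e2: "12*v*v+12*v+1 = 12*(v*v) + 12*v + 1" by (simp add: algebra_simps)
        show ?thesis unfolding e1 e2 using h assms(2) by linarith
      qed
      finally show ?thesis unfolding j2 n_def by simp
    qed
    show ?thesis by (rule finish[OF e assms(3) tn j1 jn disjI1[OF w]])
  next
    case False
    show ?thesis
    proof (cases "t + v < 2*v+1")
      case True
      have "even (t+v)" using False assms(1) by simp
      then obtain c where c: "t + v = 2*c" by blast
      define j where "j = (1 + 3*(t+v)) + 3^p*(t+v)"
      have j2: "j = 1 + 12*c*(v+1)" unfolding j_def using c assms(5) by (simp add: algebra_simps)
      have "1 + 3*(t+v) < 3^p" using assms True by simp
      then have "w3 j = w3 (1 + 3*(t+v)) + w3 (t+v)" unfolding j_def by (rule w3_add_pow)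
      then have wj: "w3 j = 1 + 2 * w3 (t+v)" using w3_step[of 1 "t+v"] by simp
      have "even (t+v)" using c by simp
      then have "even (w3 (t+v))" using w3_parity[of "t+v"] by (metis even_iff_mod_2_eq_zero)
      then have w: "w3 j mod 4 = 1" using wj by (auto elim!: evenE)
      have e: "v*j + t = c*n"
      proof -
        have "v*j + t = (v+t) + 12*c*v*v + 12*c*v" unfolding j2 by (simp add: algebra_simps)
        also have "\<dots> = c*n" unfolding n_def using c by (simp add: algebra_simps)
        finally show ?thesis .
      qed
      have j1: "1 \<le> j" using j2 by simp
      have jn: "j \<le> n - 1"
      proof -
        have "c \<le> v" using c True by simp
        then have "c*(12*(v+1)) \<le> v*(12*(v+1))" by (rule mult_le_mono1)
        then have "12*c*(v+1) \<le> 12*v*(v+1)" by (simp add: algebra_simps)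
        then show ?thesis unfolding j2 n_def by (simp add: algebra_simps)
      qed
      show ?thesis by (rule finish[OF e assms(3) tn j1 jn disjI2[OF w]])
    next
      case ge: False
      have "t = v+2 \<or> t = v+4" using ge False assms(1,4) by presburger
      then show ?thesis
      proof
        assume tv: "t = v+2"
        define j :: nat where "j = 5 + 3^p*2"
        have "w3 j = w3 5 + w3 2" unfolding j_def
          by (rule w3_add_pow) (use assms(2,5) in simp)
        then have w: "w3 j mod 4 = 0 \<or> w3 j mod 4 = 1" by (simp add: w3_1 w3_2 w3_4 w3_5 w3_11)
        have e: "v*j + t = 1*n" unfolding j_def n_def tv assms(5) by (simp add: algebra_simps)
        have jv: "j = 12*v+11" unfolding j_def assms(5) by simp
        have nv: "n - 1 = 12*(v*v)+12*v+1" unfolding n_def by (simp add: algebra_simps)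
        have h: "13*v \<le> v*v" by (rule mult_le_mono1[OF assms(2)])
        have jj: "1 \<le> j \<and> j \<le> n - 1" unfolding jv nv using h assms(2) by (intro conjI; linarith)
        show ?thesis by (rule finish[OF e assms(3) tn conjunct1[OF jj] conjunct2[OF jj] w])
      next
        assume tv: "t = v+4"
        define j :: nat where "j = 11 + 3^p*4"
        have "w3 j = w3 11 + w3 4" unfolding j_def
          by (rule w3_add_pow) (use assms(2,5) in simp)
        then have w: "w3 j mod 4 = 0 \<or> w3 j mod 4 = 1" by (simp add: w3_1 w3_2 w3_4 w3_5 w3_11)
        have e: "v*j + t = 2*n" unfolding j_def n_def tv assms(5) by (simp add: algebra_simps)
        have jv: "j = 24*v+23" unfolding j_def assms(5) by simp
        have nv: "n - 1 = 12*(v*v)+12*v+1" unfolding n_def by (simp add: algebra_simps)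
        have h: "13*v \<le> v*v" by (rule mult_le_mono1[OF assms(2)])
        have jj: "1 \<le> j \<and> j \<le> n - 1" unfolding jv nv using h assms(2) by (intro conjI; linarith)
        show ?thesis by (rule finish[OF e assms(3) tn conjunct1[OF jj] conjunct2[OF jj] w])
      qed
    qed
  qed
qed

theorem lemma6:
  fixes m :: nat
  assumes "m mod 4 = 3" and "m > 3"
  defines "n \<equiv> 3 ^ m - 1"
      and "v \<equiv> (3 ^ ((m - 1) div 2) - 1) div 2"
      and "\<delta> \<equiv> (3 ^ ((m - 1) div 2) + 11) div 2"
  shows "gcd v n = 1 \<and> {n - (\<delta> - 1) .. n - 1} \<subseteq> (\<lambda>i. (v * i) mod n) ` T_set 0 1 m"
proof -
  obtain a where ma: "m = 4*a+3" using assms(1) by (metis div_mult_mod_eq add.commute mult.commute)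
  have a1: "a \<ge> 1" using ma assms(2) by simp
  define K :: nat where "K = 3^(2*a+1)"
  have k: "(m - 1) div 2 = 2*a+1" using ma by simp
  have "(9::nat)^a mod 4 = (9 mod 4)^a mod 4" by (rule power_mod[symmetric])
  then have n9: "(9::nat)^a mod 4 = 1" by simp
  have K9: "K = 3 * 9^a" unfolding K_def by (simp add: power_mult power_add)
  have "K mod 4 = 3" unfolding K9 using n9 by (simp add: mod_mult_right_eq[symmetric])
  then obtain u where u: "K = 4*u+3" by (metis div_mult_mod_eq add.commute mult.commute)
  have "(9::nat)^1 \<le> 9^a" using a1 by (intro power_increasing) auto
  then have "K \<ge> 27" unfolding K9 by simp
  then have u6: "u \<ge> 6" using u by simp
  have vv: "v = 2*u+1" unfolding v_def k K_def[symmetric] u by simp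
  have dd: "\<delta> = 2*u+7" unfolding \<delta>_def k K_def[symmetric] u by simp
  have pm: "(3::nat)^m = 3*K*K"
  proof -
    have "(3::nat)^m = 3^(1 + (2*a+1) + (2*a+1))" unfolding ma by (rule arg_cong[where f="\<lambda>x. (3::nat)^x"]) simp
    also have "\<dots> = 3*K*K" unfolding K_def by (simp only: power_add power_one_right)
    finally show ?thesis .
  qed
  have nn: "n = 12*v*v+12*v+2" unfolding n_def pm u vv by (simp add: algebra_simps)
  have p3: "(3::nat)^(2*a+2) = 6*v+3" using K_def u vv by simp
  have oddv: "odd v" using vv by simp
  have v13: "v \<ge> 13" using vv u6 by simp
  have "gcd v n = 1"
  proof -
    have "n = 2 + v*(12*v+12)" unfolding nn by (simp add: algebra_simps)
    then have "gcd v n = gcd v 2" by (metis add.commute gcd_add_mult mult.commute)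
    also have "\<dots> = 1" using oddv by simp
    finally show ?thesis .
  qed
  moreover have "{n - (\<delta> - 1) .. n - 1} \<subseteq> (\<lambda>i. (v * i) mod n) ` T_set 0 1 m"
  proof
    fix y assume y: "y \<in> {n - (\<delta> - 1) .. n - 1}"
    define t where "t = n - y"
    have tb: "1 \<le> t" "t \<le> v+5" using y dd vv v13 nn unfolding t_def by auto
    have yt: "y = n - t" using y t_def by auto
    obtain j where j: "1 \<le> j" "j \<le> n-1" "w3 j mod 4 = 0 \<or> w3 j mod 4 = 1" "(v*j) mod n = n - t"
      using core[OF oddv v13 tb p3] nn by auto
    have "j \<in> T_set 0 1 m" unfolding T_set_def using j n_def by auto
    then show "y \<in> (\<lambda>i. (v * i) mod n) ` T_set 0 1 m" using j(4) yt by force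
  qed
  ultimately show ?thesis by blast
qed

end
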